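(* Let $\boldsymbol{\mu}_+\ne\boldsymbol{\mu}_-\in\mathbb{R}^d$, $\sigma>0$, and let $(\boldsymbol{X},Y)$ be random with $P(Y=+)=P(Y=-)=1/2$ and $\boldsymbol{X}\mid Y=i\sim N(\boldsymbol{\mu}_i,\sigma^2\boldsymbol{I}_d)$. Let $\boldsymbol{w}\in\mathbb{R}^d\setminus\{\boldsymbol{0}\}$, $b\in\mathbb{R}$, and let the linear classifier assign $\boldsymbol{x}$ to class $+$ iff $\boldsymbol{w}\cdot\boldsymbol{x}+b>0$. Let $\varepsilon>0$, $\delta\ge0$. Put $\boldsymbol{\mu}=\frac12(\boldsymbol{\mu}_+-\boldsymbol{\mu}_-)$, $\bar{\boldsymbol{\mu}}=\frac12(\boldsymbol{\mu}_++\boldsymbol{\mu}_-)$, $b'=\boldsymbol{w}\cdot\bar{\boldsymbol{\mu}}+b$, $\boldsymbol{\mu}_0=\boldsymbol{\mu}/\|\boldsymbol{\mu}\|$, let $\theta\in[0,\pi/2]$ be defined by $\cos\theta=|\boldsymbol{w}\cdot\boldsymbol{\mu}_0|/\|\boldsymbol{w}\|$, let $\beta=\min(\varepsilon\cos\theta,\delta)$ and $$g(\varepsilon,\delta,\theta)=\beta\cos\theta+\sqrt{\varepsilon^2-\beta^2}\,\sin\theta.$$ Let $p_m$ be the probability that $\boldsymbol{X}$ is misclassified and $p_{s-adv}$ the probability that $\boldsymbol{X}$ is correctly classified and has an $(\varepsilon,\delta)$-strong-adversarial example. Then $$p_{s-adv}=1-p_m-\frac12\left[\Phi\!\left(\frac{\boldsymbol{w}\cdot\boldsymbol{\mu}+b'}{\|\boldsymbol{w}\|\sigma}-\frac{g(\varepsilon,\delta,\theta)}{\sigma}\right)+\Phi\!\left(\frac{\boldsymbol{w}\cdot\boldsymbol{\mu}-b'}{\|\boldsymbol{w}\|\sigma}-\frac{g(\varepsilon,\delta,\theta)}{\sigma}\right)\right],$$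 and consequently $$p_{s-adv}+p_m=1-\frac12\left[\Phi\!\left(\frac{\boldsymbol{w}\cdot\boldsymbol{\mu}+b'}{\|\boldsymbol{w}\|\sigma}-\frac{g(\varepsilon,\delta,\theta)}{\sigma}\right)+\Phi\!\left(\frac{\boldsymbol{w}\cdot\boldsymbol{\mu}-b'}{\|\boldsymbol{w}\|\sigma}-\frac{g(\varepsilon,\delta,\theta)}{\sigma}\right)\right].$$
   Context: $\Phi$ is the standard normal CDF, $\|\cdot\|$ the Euclidean norm. An $(\varepsilon,\delta)$-strong-adversarial example of $\boldsymbol{x}$ is a point $\boldsymbol{x}'$ with $\|\boldsymbol{x}-\boldsymbol{x}'\|\le\varepsilon$ and $|(\boldsymbol{x}-\boldsymbol{x}')\cdot\boldsymbol{\mu}_0|\le\delta$ that the classifier assigns to a different class than $\boldsymbol{x}$. The angle $\theta$ is the (acute) angle between $\boldsymbol{w}$ and the line spanned by $\boldsymbol{\mu}_0$. *)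

theory Defs
  imports "HOL-Probability.Probability"
begin

definition Phi :: "real \<Rightarrow> real" where
  "Phi x = measure (density lborel std_normal_density) {..x}"

definition iso_gauss_density :: "'a::euclidean_space \<Rightarrow> real \<Rightarrow> 'a \<Rightarrow> real" where
  "iso_gauss_density m \<sigma> x =
     (2 * pi * \<sigma>\<^sup>2) powr (- real DIM('a) / 2) * exp (- (norm (x - m))\<^sup>2 / (2 * \<sigma>\<^sup>2))"

definition iso_gauss :: "'a::euclidean_space \<Rightarrow> real \<Rightarrow> 'a measure" where
  "iso_gauss m \<sigma> = density lborel (\<lambda>x. ennreal (iso_gauss_density m \<sigma> x))"

text \<open>Linear classifier: True means class +, False means class -.\<close>
definition lin_class :: "'a::euclidean_space \<Rightarrow> real \<Rightarrow> 'a \<Rightarrow> bool" where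
  "lin_class w b x \<longleftrightarrow> w \<bullet> x + b > 0"

definition has_strong_adv :: "'a::euclidean_space \<Rightarrow> real \<Rightarrow> 'a \<Rightarrow> real \<Rightarrow> real \<Rightarrow> 'a \<Rightarrow> bool" where
  "has_strong_adv w b \<mu>0 \<epsilon> \<delta> x \<longleftrightarrow>
     (\<exists>x'. norm (x - x') \<le> \<epsilon> \<and> \<bar>(x - x') \<bullet> \<mu>0\<bar> \<le> \<delta> \<and> lin_class w b x' \<noteq> lin_class w b x)"

definition p_m :: "'a::euclidean_space \<Rightarrow> 'a \<Rightarrow> real \<Rightarrow> 'a \<Rightarrow> real \<Rightarrow> real" where
  "p_m \<mu>p \<mu>n \<sigma> w b =
     1/2 * measure (iso_gauss \<mu>p \<sigma>) {x. \<not> lin_class w b x}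
   + 1/2 * measure (iso_gauss \<mu>n \<sigma>) {x. lin_class w b x}"

definition p_sadv :: "'a::euclidean_space \<Rightarrow> 'a \<Rightarrow> real \<Rightarrow> 'a \<Rightarrow> real \<Rightarrow> real \<Rightarrow> real \<Rightarrow> real" where
  "p_sadv \<mu>p \<mu>n \<sigma> w b \<epsilon> \<delta> =
     (let \<mu> = (1/2) *\<^sub>R (\<mu>p - \<mu>n); \<mu>0 = (1 / norm \<mu>) *\<^sub>R \<mu> in
       1/2 * measure (iso_gauss \<mu>p \<sigma>) {x. lin_class w b x \<and> has_strong_adv w b \<mu>0 \<epsilon> \<delta> x}
     + 1/2 * measure (iso_gauss \<mu>n \<sigma>) {x. \<not> lin_class w b x \<and> has_strong_adv w b \<mu>0 \<epsilon> \<delta> x})"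

end

theory Submission
  imports Defs
begin


lemma PiM_density_prod:
  fixes I :: "'i set" and f :: "'i \<Rightarrow> real \<Rightarrow> real"
  assumes fin: "finite I" and meas[measurable]: "\<And>i. f i \<in> borel_measurable borel"
    and nn: "\<And>i x. 0 \<le> f i x" and ps: "\<And>i. prob_space (density lborel (f i))"
  shows "density (PiM I (\<lambda>_. lborel)) (\<lambda>x. \<Prod>i\<in>I. ennreal (f i (x i))) = PiM I (\<lambda>i. density lborel (f i))"
proof -
  interpret product_sigma_finite "\<lambda>i. density lborel (f i)"
    unfolding product_sigma_finite_def using ps prob_space_imp_sigma_finite by blast
  interpret L: product_sigma_finite "\<lambda>i. lborel :: real measure"
    unfolding product_sigma_finite_def by (simp add: lborel.sigma_finite_measure_axioms)
  show ?thesis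
  proof (rule PiM_eqI[OF fin])
    show "sets (density (PiM I (\<lambda>_. lborel)) (\<lambda>x. \<Prod>i\<in>I. ennreal (f i (x i)))) = sets (PiM I (\<lambda>i. density lborel (f i)))"
      by (auto intro!: sets_PiM_cong)
  next
    fix A assume A: "\<And>i. i \<in> I \<Longrightarrow> A i \<in> sets (density lborel (f i))"
    then have A': "\<And>i. i \<in> I \<Longrightarrow> A i \<in> sets borel" by simp
    have PA: "Pi\<^sub>E I A \<in> sets (PiM I (\<lambda>_. lborel))"
      using A' by (intro sets_PiM_I_finite) (auto simp: fin)
    have "emeasure (density (PiM I (\<lambda>_. lborel)) (\<lambda>x. \<Prod>i\<in>I. ennreal (f i (x i)))) (Pi\<^sub>E I A)
       = (\<integral>\<^sup>+x. (\<Prod>i\<in>I. ennreal (f i (x i))) * indicator (Pi\<^sub>E I A) x \<partial>PiM I (\<lambda>_. lborel))"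
      using PA by (subst emeasure_density) auto
    also have "\<dots> = (\<integral>\<^sup>+x. (\<Prod>i\<in>I. ennreal (f i (x i)) * indicator (A i) (x i)) \<partial>PiM I (\<lambda>_. lborel))"
    proof (rule nn_integral_cong)
      fix x assume "x \<in> space (PiM I (\<lambda>_. lborel :: real measure))"
      then have "x \<in> extensional I" by (simp add: space_PiM PiE_def)
      then have "indicator (Pi\<^sub>E I A) x = (\<Prod>i\<in>I. indicator (A i) (x i) :: ennreal)"
      proof (cases "\<forall>i\<in>I. x i \<in> A i")
        case True
        then show ?thesis using \<open>x \<in> extensional I\<close> by (simp add: indicator_def PiE_def)
      next
        case False
        then obtain j where "j \<in> I" "x j \<notin> A j" by blast
        then show ?thesis using fin by (auto simp: indicator_def PiE_def intro!: prod_zero[symmetric] bexI[of _ j])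
      qed
      then show "(\<Prod>i\<in>I. ennreal (f i (x i))) * indicator (Pi\<^sub>E I A) x = (\<Prod>i\<in>I. ennreal (f i (x i)) * indicator (A i) (x i))"
        by (simp add: prod.distrib)
    qed
    also have "\<dots> = (\<Prod>i\<in>I. \<integral>\<^sup>+x. ennreal (f i x) * indicator (A i) x \<partial>lborel)"
      using A' by (intro L.product_nn_integral_prod[OF fin, where f="\<lambda>i x. ennreal (f i x) * indicator (A i) x"]) auto
    also have "\<dots> = (\<Prod>i\<in>I. emeasure (density lborel (f i)) (A i))"
      using A' by (intro prod.cong refl) (simp add: emeasure_density)
    finally show "emeasure (density (PiM I (\<lambda>_. lborel)) (\<lambda>x. \<Prod>i\<in>I. ennreal (f i (x i)))) (Pi\<^sub>E I A) = (\<Prod>i\<in>I. emeasure (density lborel (f i)) (A i))" .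
  qed
qed



lemma inner_e: 
  fixes b :: "'a::euclidean_space" assumes "b \<in> Basis"
  shows "(\<Sum>c\<in>Basis. f c *\<^sub>R c) \<bullet> b = f b"
proof -
  have "(\<Sum>c\<in>Basis. f c *\<^sub>R c) \<bullet> b = (\<Sum>c\<in>Basis. f c * (c \<bullet> b))" by (simp add: inner_sum_left)
  also have "\<dots> = (\<Sum>c\<in>Basis. if c = b then f c else 0)" by (rule sum.cong) (auto simp: inner_Basis assms)
  also have "\<dots> = f b" using assms by simp
  finally show ?thesis .
qed

lemma norm_sq_basis:
  fixes x :: "'a::euclidean_space"
  shows "(norm x)\<^sup>2 = (\<Sum>b\<in>Basis. (x \<bullet> b)\<^sup>2)"
  unfolding power2_norm_eq_inner by (subst euclidean_inner) (simp add: power2_eq_square)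

lemma iso_density_prod:
  fixes m :: "'a::euclidean_space" assumes "\<sigma> > 0"
  shows "iso_gauss_density m \<sigma> (\<Sum>c\<in>Basis. f c *\<^sub>R c) = (\<Prod>b\<in>Basis. normal_density (m \<bullet> b) \<sigma> (f b))"
proof -
  let ?e = "(\<Sum>c\<in>Basis. f c *\<^sub>R c) :: 'a"
  have n: "(norm (?e - m))\<^sup>2 = (\<Sum>b\<in>Basis. (f b - m \<bullet> b)\<^sup>2)"
    by (subst norm_sq_basis) (auto intro!: sum.cong simp: inner_diff_left inner_e)
  have c: "(2 * pi * \<sigma>\<^sup>2) powr (- real DIM('a) / 2) = (1 / sqrt (2 * pi * \<sigma>\<^sup>2)) ^ DIM('a)"
  proof -
    have pos: "0 < 2 * pi * \<sigma>\<^sup>2" using assms by simp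
    have "(1 / sqrt (2 * pi * \<sigma>\<^sup>2)) ^ DIM('a) = ((2 * pi * \<sigma>\<^sup>2) powr (-1/2)) ^ DIM('a)"
      using pos by (simp add: powr_minus_divide powr_half_sqrt)
    also have "\<dots> = (2 * pi * \<sigma>\<^sup>2) powr (- real DIM('a) / 2)"
    proof -
      have "((2 * pi * \<sigma>\<^sup>2) powr (-1/2)) ^ DIM('a) = ((2 * pi * \<sigma>\<^sup>2) powr (-1/2)) powr real DIM('a)"
        using pos by (subst powr_realpow) auto
      also have "\<dots> = (2 * pi * \<sigma>\<^sup>2) powr (-1/2 * real DIM('a))" by (simp add: powr_powr)
      finally show ?thesis by simp
    qed
    finally show ?thesis by simp
  qed
  have "(\<Prod>b\<in>Basis. normal_density (m \<bullet> b) \<sigma> (f b)) =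
     (\<Prod>b\<in>(Basis::'a set). 1 / sqrt (2 * pi * \<sigma>\<^sup>2)) * (\<Prod>b\<in>Basis. exp (-(f b - m \<bullet> b)\<^sup>2 / (2 * \<sigma>\<^sup>2)))"
    by (simp only: normal_density_def prod.distrib)
  also have "\<dots> = (1 / sqrt (2 * pi * \<sigma>\<^sup>2)) ^ DIM('a) * exp (- (\<Sum>b\<in>Basis. (f b - m \<bullet> b)\<^sup>2) / (2 * \<sigma>\<^sup>2))"
  proof -
    have "(\<Prod>b\<in>(Basis::'a set). 1 / sqrt (2 * pi * \<sigma>\<^sup>2)) = (1 / sqrt (2 * pi * \<sigma>\<^sup>2)) ^ DIM('a)" by simp
    moreover have "(\<Prod>b\<in>Basis. exp (-(f b - m \<bullet> b)\<^sup>2 / (2 * \<sigma>\<^sup>2))) = exp (\<Sum>b\<in>Basis. -(f b - m \<bullet> b)\<^sup>2 / (2 * \<sigma>\<^sup>2))"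
      by (rule exp_sum[symmetric]) simp
    moreover have "(\<Sum>b\<in>(Basis::'a set). -(f b - m \<bullet> b)\<^sup>2 / (2 * \<sigma>\<^sup>2)) = - (\<Sum>b\<in>Basis. (f b - m \<bullet> b)\<^sup>2) / (2 * \<sigma>\<^sup>2)"
      by (simp only: sum_divide_distrib[symmetric] sum_negf)
    ultimately show ?thesis by simp
  qed
  finally show ?thesis unfolding iso_gauss_density_def n c by simp
qed



lemma std_normal_ps: "prob_space (density lborel std_normal_density)"
  by (rule prob_space_normal_density) simp

lemma std_distr_affine:
  assumes "\<alpha> \<noteq> 0"
  shows "distr (density lborel std_normal_density) lborel (\<lambda>x. \<beta> + \<alpha> * x) = density lborel (normal_density \<beta> \<bar>\<alpha>\<bar>)"
proof -
  interpret D: prob_space "density lborel std_normal_density" by (rule std_normal_ps)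
  have d0: "distributed (density lborel std_normal_density) lborel (\<lambda>x. x) std_normal_density"
    unfolding distributed_def
  proof (intro conjI)
    have "distr (density lborel std_normal_density) lborel (\<lambda>x. x) = distr (density lborel std_normal_density) (density lborel std_normal_density) (\<lambda>x. x)"
      by (rule distr_cong) auto
    then show "distr (density lborel std_normal_density) lborel (\<lambda>x. x) = density lborel std_normal_density"
      by (simp add: distr_id)
  qed auto
  from D.normal_density_affine[OF d0, of \<alpha> \<beta>] assms
  show ?thesis unfolding distributed_def by simp
qed

lemma Phi_point:
  "measure (density lborel std_normal_density) {..<y} = Phi y"
proof -
  interpret D: prob_space "density lborel std_normal_density" by (rule std_normal_ps)
  have "AE x in lborel. x \<in> {y} \<longrightarrow> std_normal_density x = 0"
    using AE_lborel_singleton[of y] by eventually_elim auto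
  then have "{y} \<in> null_sets (density lborel std_normal_density)"
    by (subst null_sets_density_iff) auto
  then have "measure (density lborel std_normal_density) {..y} = measure (density lborel std_normal_density) ({..<y} \<union> {y})"
    by (metis ivl_disj_un_singleton(2))
  also have "\<dots> = measure (density lborel std_normal_density) {..<y}"
    by (rule D.measure_zero_union) (use \<open>{y} \<in> null_sets _\<close> in \<open>auto simp: measure_def null_sets_def\<close>)
  finally show ?thesis unfolding Phi_def by simp
qed

lemma Phi_neg: "Phi (- y) = 1 - Phi y"
proof -
  interpret D: prob_space "density lborel std_normal_density" by (rule std_normal_ps)
  have e: "density lborel std_normal_density = distr (density lborel std_normal_density) lborel (\<lambda>x. 0 + (-1) * x)"
    using std_distr_affine[of "-1" 0] by simp
  have "Phi (- y) = measure (distr (density lborel std_normal_density) lborel (\<lambda>x. 0 + (-1) * x)) {..-y}"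
    unfolding Phi_def by (subst e[symmetric]) simp
  also have "\<dots> = measure (density lborel std_normal_density) ((\<lambda>x. 0 + (-1) * x) -` {..-y} \<inter> UNIV)"
    by (subst measure_distr) auto
  also have "(\<lambda>x. 0 + (-1) * x) -` {..-y} \<inter> UNIV = UNIV - {..<y}" by auto
  also have "measure (density lborel std_normal_density) (UNIV - {..<y}) = 1 - Phi y"
    using D.prob_compl[of "{..<y}"] Phi_point by simp
  finally show ?thesis .
qed

lemma normal_le:
  assumes s: "s > 0"
  shows "measure (density lborel (normal_density \<mu> s)) {..t} = Phi ((t - \<mu>) / s)"
proof -
  have e: "density lborel (normal_density \<mu> s) = distr (density lborel std_normal_density) lborel (\<lambda>x. \<mu> + s * x)"
    using std_distr_affine[of s \<mu>] s by simp
  have "measure (density lborel (normal_density \<mu> s)) {..t} = measure (density lborel std_normal_density) ((\<lambda>x. \<mu> + s * x) -` {..t} \<inter> UNIV)"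
    unfolding e by (subst measure_distr) auto
  also have "(\<lambda>x. \<mu> + s * x) -` {..t} \<inter> UNIV = {..(t - \<mu>) / s}"
    using s by (auto simp: field_simps)
  finally show ?thesis unfolding Phi_def .
qed

lemma normal_gt:
  assumes s: "s > 0"
  shows "measure (density lborel (normal_density \<mu> s)) {t<..} = 1 - Phi ((t - \<mu>) / s)"
proof -
  interpret D: prob_space "density lborel (normal_density \<mu> s)" by (rule prob_space_normal_density) (rule s)
  have "{t<..} = UNIV - {..t}" by auto
  then show ?thesis using D.prob_compl[of "{..t}"] normal_le[OF s] by simp
qed



lemma h_mono:
  fixes A W c \<epsilon> \<delta> s :: real
  assumes s0: "0 \<le> s" and sd: "s \<le> \<delta>" and dl: "\<delta> * W < \<epsilon> * A" and A0: "0 \<le> A" and AW: "A \<le> W"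
    and c0: "0 \<le> c" and c2: "c\<^sup>2 = W\<^sup>2 - A\<^sup>2"
  shows "A * s + c * sqrt (\<epsilon>\<^sup>2 - s\<^sup>2) \<le> A * \<delta> + c * sqrt (\<epsilon>\<^sup>2 - \<delta>\<^sup>2)"
proof -
  have d0: "0 \<le> \<delta>" using s0 sd by linarith
  have W0: "0 \<le> W" using A0 AW by linarith
  have eA: "0 < \<epsilon> * A" using dl d0 W0 by (smt (verit) mult_nonneg_nonneg)
  have e0: "0 < \<epsilon>" using eA A0 by (smt (verit) mult_nonpos_nonneg)
  have "\<delta> * W < \<epsilon> * W" using dl AW e0 by (smt (verit) mult_left_mono)
  then have de: "\<delta> < \<epsilon>" using W0 by (smt (verit) mult_right_mono)
  define P where "P = sqrt (\<epsilon>\<^sup>2 - s\<^sup>2)"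
  define Q where "Q = sqrt (\<epsilon>\<^sup>2 - \<delta>\<^sup>2)"
  have Q0: "0 < Q" unfolding Q_def using de d0 by (simp add: power_strict_mono)
  have se: "s\<^sup>2 \<le> \<epsilon>\<^sup>2" using s0 sd de by (intro power_mono) auto
  have de2: "\<delta>\<^sup>2 \<le> \<epsilon>\<^sup>2" using d0 de by (intro power_mono) auto
  have P2: "P\<^sup>2 = \<epsilon>\<^sup>2 - s\<^sup>2" unfolding P_def using se by simp
  have Q2: "Q\<^sup>2 = \<epsilon>\<^sup>2 - \<delta>\<^sup>2" unfolding Q_def using de2 by simp
  have P0: "0 \<le> P" unfolding P_def using se by simp
  have key: "x * c \<le> A * sqrt (\<epsilon>\<^sup>2 - x\<^sup>2)" if x0: "0 \<le> x" and xd: "x \<le> \<delta>" for x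
  proof -
    have xW: "x * W \<le> \<delta> * W" using xd W0 by (simp add: mult_right_mono)
    have "(x * W)\<^sup>2 \<le> (\<epsilon> * A)\<^sup>2" using xW dl x0 W0 by (intro power_mono) auto
    then have "x\<^sup>2 * W\<^sup>2 \<le> \<epsilon>\<^sup>2 * A\<^sup>2" by (simp add: power_mult_distrib)
    then have "x\<^sup>2 * c\<^sup>2 \<le> A\<^sup>2 * (\<epsilon>\<^sup>2 - x\<^sup>2)" unfolding c2 by (simp add: algebra_simps)
    have xe: "x\<^sup>2 \<le> \<epsilon>\<^sup>2" using x0 xd de by (intro power_mono) auto
    have "(x * c)\<^sup>2 \<le> (A * sqrt (\<epsilon>\<^sup>2 - x\<^sup>2))\<^sup>2"
      using \<open>x\<^sup>2 * c\<^sup>2 \<le> A\<^sup>2 * (\<epsilon>\<^sup>2 - x\<^sup>2)\<close> xe by (simp add: power_mult_distrib)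
    then show ?thesis by (rule power2_le_imp_le) (use A0 xe in simp)
  qed
  have k1: "\<delta> * c \<le> A * Q" using key[OF d0 order_refl] unfolding Q_def .
  have k2: "s * c \<le> A * P" using key[OF s0 sd] unfolding P_def .
  have "c * (P - Q) * (P + Q) = c * (P\<^sup>2 - Q\<^sup>2)" by (simp add: power2_eq_square algebra_simps)
  also have "\<dots> = c * (\<delta>\<^sup>2 - s\<^sup>2)" using P2 Q2 by simp
  also have "\<dots> = c * (\<delta> - s) * (\<delta> + s)" by (simp add: power2_eq_square algebra_simps)
  also have "\<dots> = (\<delta> - s) * ((\<delta> + s) * c)" by (simp add: algebra_simps)
  also have "\<dots> \<le> (\<delta> - s) * (A * (P + Q))"
    using k1 k2 sd by (intro mult_left_mono) (auto simp: algebra_simps)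
  finally have "c * (P - Q) * (P + Q) \<le> A * (\<delta> - s) * (P + Q)" by (simp add: algebra_simps)
  then have "c * (P - Q) \<le> A * (\<delta> - s)" using P0 Q0 by (simp add: mult_le_cancel_right)
  then show ?thesis unfolding P_def[symmetric] Q_def[symmetric] by (simp add: algebra_simps)
qed



lemma iso_gauss_eq:
  fixes m :: "'a::euclidean_space" assumes s: "\<sigma> > 0"
  shows "iso_gauss m \<sigma> = distr (PiM Basis (\<lambda>b. density lborel (normal_density (m \<bullet> b) \<sigma>))) borel (\<lambda>f. \<Sum>b\<in>Basis. f b *\<^sub>R b)"
proof -
  let ?L = "PiM (Basis::'a set) (\<lambda>_. lborel :: real measure)"
  let ?e = "\<lambda>f. (\<Sum>b\<in>Basis. f b *\<^sub>R b :: 'a)"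
  have em[measurable]: "?e \<in> measurable ?L borel" by measurable
  have Gm[measurable]: "(\<lambda>x. ennreal (iso_gauss_density m \<sigma> x)) \<in> borel_measurable borel"
    unfolding iso_gauss_density_def by measurable
  have l: "(lborel :: 'a measure) = distr ?L borel ?e" by (rule lborel_eq)
  have "iso_gauss m \<sigma> = density (distr ?L borel ?e) (\<lambda>x. ennreal (iso_gauss_density m \<sigma> x))"
    unfolding iso_gauss_def l[symmetric] ..
  also have "\<dots> = distr (density ?L (\<lambda>f. ennreal (iso_gauss_density m \<sigma> (?e f)))) borel ?e"
    by (rule density_distr) measurable
  also have "(\<lambda>f. ennreal (iso_gauss_density m \<sigma> (?e f))) = (\<lambda>f. \<Prod>b\<in>Basis. ennreal (normal_density (m \<bullet> b) \<sigma> (f b)))"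
    by (rule ext) (simp add: iso_density_prod[OF s] prod_ennreal)
  also have "density ?L \<dots> = PiM Basis (\<lambda>b. density lborel (normal_density (m \<bullet> b) \<sigma>))"
    by (rule PiM_density_prod) (auto simp: prob_space_normal_density s)
  finally show ?thesis .
qed

lemma iso_gauss_inner:
  fixes m w :: "'a::euclidean_space" assumes s: "\<sigma> > 0" and w: "w \<noteq> 0"
  shows "distr (iso_gauss m \<sigma>) lborel (\<lambda>x. w \<bullet> x) = density lborel (normal_density (w \<bullet> m) (norm w * \<sigma>))"
proof -
  define N where "N = (\<lambda>b::'a. density lborel (normal_density (m \<bullet> b) \<sigma>))"
  define P where "P = PiM (Basis::'a set) N"
  define I where "I = {b\<in>(Basis::'a set). w \<bullet> b \<noteq> 0}"
  interpret product_prob_space N Basis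
    unfolding product_prob_space_def product_prob_space_axioms_def product_sigma_finite_def N_def
    using prob_space_normal_density[OF s] prob_space_imp_sigma_finite by blast
  interpret Q: prob_space P unfolding P_def by (rule P.prob_space_axioms)
  have finI: "finite I" and IB: "I \<subseteq> Basis" unfolding I_def by auto
  have Ine: "I \<noteq> {}"
  proof
    assume "I = {}"
    then have "\<forall>b\<in>Basis. w \<bullet> b = 0" unfolding I_def by auto
    then show False using w euclidean_all_zero_iff by blast
  qed
  have sN: "sets (N b) = sets borel" for b unfolding N_def by simp
  have comp: "distr P lborel (\<lambda>f. f b) = N b" if "b \<in> Basis" for b
  proof -
    have "distr P lborel (\<lambda>f. f b) = distr P (N b) (\<lambda>f. f b)"
      by (rule distr_cong) (auto simp: sN)
    also have "\<dots> = N b" unfolding P_def by (rule distr_PiM_component) (auto simp: that N_def prob_space_normal_density s)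
    finally show ?thesis .
  qed
  have dcomp: "distributed P lborel (\<lambda>f. f b) (normal_density (m \<bullet> b) \<sigma>)" if "b \<in> Basis" for b
    unfolding distributed_def using comp[OF that] that
    by (auto simp: N_def P_def)
  have dX: "distributed P lborel (\<lambda>f. (w \<bullet> b) * f b) (normal_density ((w \<bullet> b) * (m \<bullet> b)) (\<bar>w \<bullet> b\<bar> * \<sigma>))"
    if "b \<in> I" for b
    using Q.normal_density_affine[OF dcomp[of b] s, of "w \<bullet> b" 0] that unfolding I_def by simp
  have ind0: "Q.indep_vars (\<lambda>_. borel) (\<lambda>b f. f b) I"
  proof (subst Q.indep_vars_iff_distr_eq_PiM'[OF Ine])
    show "(\<lambda>f. f i) \<in> measurable P borel" if "i \<in> I" for i
    proof -
      have "(\<lambda>f. f i) \<in> measurable (PiM Basis N) (N i)"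
        by (rule measurable_component_singleton) (use that IB in auto)
      then show ?thesis unfolding P_def using measurable_cong_sets[OF refl sN[of i], of "PiM Basis N"] by metis
    qed
    have "distr P (PiM I (\<lambda>_. borel)) (\<lambda>x. \<lambda>i\<in>I. x i) = distr P (PiM I N) (\<lambda>x. restrict x I)"
      by (rule distr_cong) (auto intro!: sets_PiM_cong simp: sN)
    also have "\<dots> = PiM I N" unfolding P_def by (rule distr_PiM_restrict_finite[OF finI IB])
    also have "\<dots> = PiM I (\<lambda>i. distr P borel (\<lambda>x. x i))"
    proof (rule PiM_cong)
      fix i assume "i \<in> I"
      then have "i \<in> Basis" using IB by auto
      have "distr P borel (\<lambda>x. x i) = distr P lborel (\<lambda>x. x i)" by (rule distr_cong) auto
      then show "N i = distr P borel (\<lambda>x. x i)" using comp[OF \<open>i \<in> Basis\<close>] by simp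
    qed simp
    finally show "distr P (PiM I (\<lambda>_. borel)) (\<lambda>x. \<lambda>i\<in>I. x i) = PiM I (\<lambda>i. distr P borel (\<lambda>x. x i))" .
  qed
  have ind: "Q.indep_vars (\<lambda>_. borel) (\<lambda>b f. (w \<bullet> b) * f b) I"
    using Q.indep_vars_compose2[OF ind0, of "\<lambda>b x. (w \<bullet> b) * x" "\<lambda>_. borel"] by simp
  have sumd: "distributed P lborel (\<lambda>f. \<Sum>b\<in>I. (w \<bullet> b) * f b)
      (normal_density (\<Sum>b\<in>I. (w \<bullet> b) * (m \<bullet> b)) (sqrt (\<Sum>b\<in>I. (\<bar>w \<bullet> b\<bar> * \<sigma>)\<^sup>2)))"
    by (rule Q.sum_indep_normal[OF finI Ine ind]) (use s dX in \<open>auto simp: I_def\<close>)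
  have mean: "(\<Sum>b\<in>I. (w \<bullet> b) * (m \<bullet> b)) = w \<bullet> m"
  proof -
    have "(\<Sum>b\<in>I. (w \<bullet> b) * (m \<bullet> b)) = (\<Sum>b\<in>Basis. (w \<bullet> b) * (m \<bullet> b))"
      by (rule sum.mono_neutral_left) (auto simp: I_def)
    then show ?thesis using euclidean_inner[of w m] by simp
  qed
  have var: "sqrt (\<Sum>b\<in>I. (\<bar>w \<bullet> b\<bar> * \<sigma>)\<^sup>2) = norm w * \<sigma>"
  proof -
    have "(\<Sum>b\<in>I. (\<bar>w \<bullet> b\<bar> * \<sigma>)\<^sup>2) = (\<Sum>b\<in>Basis. (w \<bullet> b)\<^sup>2) * \<sigma>\<^sup>2"
    proof -
      have "(\<Sum>b\<in>I. (\<bar>w \<bullet> b\<bar> * \<sigma>)\<^sup>2) = (\<Sum>b\<in>Basis. (\<bar>w \<bullet> b\<bar> * \<sigma>)\<^sup>2)"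
        by (rule sum.mono_neutral_left) (auto simp: I_def)
      also have "\<dots> = (\<Sum>b\<in>Basis. (w \<bullet> b)\<^sup>2) * \<sigma>\<^sup>2"
        by (simp add: sum_distrib_right power_mult_distrib)
      finally show ?thesis .
    qed
    also have "\<dots> = (norm w * \<sigma>)\<^sup>2" by (simp add: norm_sq_basis[symmetric] power_mult_distrib)
    finally show ?thesis using s by simp
  qed
  have eqf: "w \<bullet> (\<Sum>b\<in>Basis. f b *\<^sub>R b) = (\<Sum>b\<in>I. (w \<bullet> b) * f b)" for f :: "'a \<Rightarrow> real"
  proof -
    have "w \<bullet> (\<Sum>b\<in>Basis. f b *\<^sub>R b) = (\<Sum>b\<in>Basis. (w \<bullet> b) * f b)"
      by (simp add: inner_sum_right mult.commute)
    also have "\<dots> = (\<Sum>b\<in>I. (w \<bullet> b) * f b)"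
      by (rule sum.mono_neutral_right) (auto simp: I_def)
    finally show ?thesis .
  qed
  have "distr (iso_gauss m \<sigma>) lborel (\<lambda>x. w \<bullet> x) = distr P lborel (\<lambda>f. w \<bullet> (\<Sum>b\<in>Basis. f b *\<^sub>R b))"
    unfolding iso_gauss_eq[OF s] P_def N_def
    by (subst distr_distr) (auto simp: comp_def)
  also have "\<dots> = distr P lborel (\<lambda>f. \<Sum>b\<in>I. (w \<bullet> b) * f b)" by (simp add: eqf)
  also have "\<dots> = density lborel (normal_density (w \<bullet> m) (norm w * \<sigma>))"
    using sumd unfolding distributed_def mean var by simp
  finally show ?thesis .
qed



lemma adv_bound:
  fixes w u :: "'a::euclidean_space" and a c \<beta> K \<epsilon> \<delta> :: real
  assumes u1: "norm u = 1" and w0: "w \<noteq> 0" and e0: "\<epsilon> > 0" and d0: "\<delta> \<ge> 0"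
    and a: "a = w \<bullet> u" and c: "c = sqrt ((norm w)\<^sup>2 - a\<^sup>2)"
    and b: "\<beta> = min (\<epsilon> * (\<bar>a\<bar> / norm w)) \<delta>" and K: "K = \<bar>a\<bar> * \<beta> + c * sqrt (\<epsilon>\<^sup>2 - \<beta>\<^sup>2)"
  shows "(\<forall>v. norm v \<le> \<epsilon> \<and> \<bar>v \<bullet> u\<bar> \<le> \<delta> \<longrightarrow> w \<bullet> v \<le> K) \<and> (\<exists>v. norm v \<le> \<epsilon> \<and> \<bar>v \<bullet> u\<bar> \<le> \<delta> \<and> w \<bullet> v = K)"
proof -
  have nw: "norm w > 0" using w0 by simp
  have uu: "u \<bullet> u = 1" using u1 by (simp add: power2_norm_eq_inner[symmetric])
  have aw: "\<bar>a\<bar> \<le> norm w" unfolding a using Cauchy_Schwarz_ineq2[of w u] u1 by simp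
  have a2: "a\<^sup>2 \<le> (norm w)\<^sup>2" using aw by (metis abs_ge_zero power2_abs power_mono)
  have c0: "0 \<le> c" unfolding c using a2 by simp
  have c2: "c\<^sup>2 = (norm w)\<^sup>2 - a\<^sup>2" unfolding c using a2 by simp
  define w' where "w' = w - a *\<^sub>R u"
  have w'u: "w' \<bullet> u = 0" unfolding w'_def a by (simp add: inner_diff_left uu)
  have uw': "u \<bullet> w' = 0" using w'u by (simp add: inner_commute)
  have nw'2: "(norm w')\<^sup>2 = (norm w)\<^sup>2 - a\<^sup>2"
    unfolding w'_def power2_norm_eq_inner
    by (simp add: inner_diff_left inner_diff_right uu a inner_commute power2_eq_square)
  have nw': "norm w' = c" unfolding c nw'2[symmetric] by simp
  show ?thesis
  proof (cases "\<epsilon> * (\<bar>a\<bar> / norm w) \<le> \<delta>")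
    case True
    then have bb: "\<beta> = \<epsilon> * (\<bar>a\<bar> / norm w)" unfolding b by simp
    have "\<epsilon>\<^sup>2 - \<beta>\<^sup>2 = (\<epsilon> * c / norm w)\<^sup>2"
      unfolding bb using nw by (simp add: power_mult_distrib power_divide c2 field_simps)
    then have sq: "sqrt (\<epsilon>\<^sup>2 - \<beta>\<^sup>2) = \<epsilon> * c / norm w" using e0 c0 nw by simp
    have KK: "K = \<epsilon> * norm w"
    proof -
      have "K = \<bar>a\<bar> * \<beta> + c * (\<epsilon> * c / norm w)" unfolding K sq ..
      also have "\<dots> = \<epsilon> * (a\<^sup>2 + c\<^sup>2) / norm w" unfolding bb using nw
        by (simp add: field_simps power2_eq_square)
      also have "\<dots> = \<epsilon> * norm w" unfolding c2 using nw by (simp add: power2_eq_square)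
      finally show ?thesis .
    qed
    show ?thesis
    proof (intro conjI allI impI exI)
      fix v :: 'a assume "norm v \<le> \<epsilon> \<and> \<bar>v \<bullet> u\<bar> \<le> \<delta>"
      then have "norm w * norm v \<le> norm w * \<epsilon>" using nw by (intro mult_left_mono) auto
      then have "w \<bullet> v \<le> norm w * \<epsilon>"
        using norm_cauchy_schwarz[of w v] by linarith
      then show "w \<bullet> v \<le> K" unfolding KK by (simp add: mult.commute)
    next
      let ?v = "(\<epsilon> / norm w) *\<^sub>R w"
      show "norm ?v \<le> \<epsilon>" using nw e0 by simp
      show "\<bar>?v \<bullet> u\<bar> \<le> \<delta>" using True e0 nw unfolding a by (simp add: abs_mult)
      show "w \<bullet> ?v = K" unfolding KK using nw by (simp add: power2_norm_eq_inner[symmetric] power2_eq_square)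
    qed
  next
    case False
    then have bb: "\<beta> = \<delta>" and dl: "\<delta> * norm w < \<epsilon> * \<bar>a\<bar>" unfolding b using nw by (auto simp: field_simps)
    define Q where "Q = sqrt (\<epsilon>\<^sup>2 - \<delta>\<^sup>2)"
    have "\<bar>a\<bar> / norm w \<le> 1" using aw nw by simp
    then have "\<epsilon> * (\<bar>a\<bar> / norm w) \<le> \<epsilon>" using e0 by (intro mult_left_le) auto
    then have de: "\<delta> \<le> \<epsilon>" using False by linarith
    have de2: "\<delta>\<^sup>2 \<le> \<epsilon>\<^sup>2" using d0 de by (intro power_mono) auto
    have KK: "K = \<bar>a\<bar> * \<delta> + c * Q" unfolding K bb Q_def ..
    show ?thesis
    proof (intro conjI allI impI exI)
      fix v :: 'a assume v: "norm v \<le> \<epsilon> \<and> \<bar>v \<bullet> u\<bar> \<le> \<delta>"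
      define s where "s = v \<bullet> u"
      define v' where "v' = v - s *\<^sub>R u"
      have v'u: "v' \<bullet> u = 0" unfolding v'_def s_def by (simp add: inner_diff_left uu)
      have nv'2: "(norm v')\<^sup>2 = (norm v)\<^sup>2 - s\<^sup>2"
        unfolding v'_def power2_norm_eq_inner
        by (simp add: inner_diff_left inner_diff_right uu s_def inner_commute power2_eq_square)
      have dec: "w \<bullet> v = a * s + w' \<bullet> v'"
      proof -
        have "w = a *\<^sub>R u + w'" "v = s *\<^sub>R u + v'" unfolding w'_def v'_def by simp_all
        then have "w \<bullet> v = (a *\<^sub>R u + w') \<bullet> (s *\<^sub>R u + v')" by simp
        also have "\<dots> = a * s * (u \<bullet> u) + a * (u \<bullet> v') + s * (w' \<bullet> u) + w' \<bullet> v'"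
          by (simp add: inner_add_left inner_add_right algebra_simps)
        finally show ?thesis using uu w'u v'u by (simp add: inner_commute)
      qed
      have sabs: "\<bar>s\<bar> \<le> \<delta>" using v unfolding s_def by simp
      have nv2: "(norm v)\<^sup>2 \<le> \<epsilon>\<^sup>2" using v by (intro power_mono) auto
      have "norm v' = sqrt ((norm v)\<^sup>2 - s\<^sup>2)" using nv'2 by (metis norm_ge_zero real_sqrt_unique)
      also have "\<dots> \<le> sqrt (\<epsilon>\<^sup>2 - \<bar>s\<bar>\<^sup>2)" using nv2 by simp
      finally have nv': "norm v' \<le> sqrt (\<epsilon>\<^sup>2 - \<bar>s\<bar>\<^sup>2)" .
      have "w' \<bullet> v' \<le> c * norm v'" using norm_cauchy_schwarz[of w' v'] nw' by simp
      also have "\<dots> \<le> c * sqrt (\<epsilon>\<^sup>2 - \<bar>s\<bar>\<^sup>2)" using nv' c0 by (rule mult_left_mono)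
      finally have wv': "w' \<bullet> v' \<le> c * sqrt (\<epsilon>\<^sup>2 - \<bar>s\<bar>\<^sup>2)" .
      have "a * s \<le> \<bar>a\<bar> * \<bar>s\<bar>" by (metis abs_ge_self abs_mult)
      then have "w \<bullet> v \<le> \<bar>a\<bar> * \<bar>s\<bar> + c * sqrt (\<epsilon>\<^sup>2 - \<bar>s\<bar>\<^sup>2)"
        unfolding dec using wv' by linarith
      also have "\<dots> \<le> \<bar>a\<bar> * \<delta> + c * sqrt (\<epsilon>\<^sup>2 - \<delta>\<^sup>2)"
        by (rule h_mono[where W="norm w"]) (use sabs dl aw c0 c2 in auto)
      finally show "w \<bullet> v \<le> K" unfolding KK Q_def .
    next
      let ?v = "(\<delta> * sgn a) *\<^sub>R u + (Q / c) *\<^sub>R w'"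
      have vu: "?v \<bullet> u = \<delta> * sgn a" by (simp add: inner_add_left uu w'u)
      have "(norm ?v)\<^sup>2 = (\<delta> * sgn a)\<^sup>2 + (Q / c)\<^sup>2 * (norm w')\<^sup>2"
        unfolding power2_norm_eq_inner
        by (simp add: inner_add_left inner_add_right uu w'u uw' power2_eq_square)
      also have "\<dots> \<le> \<delta>\<^sup>2 + Q\<^sup>2"
      proof -
        have "(\<delta> * sgn a)\<^sup>2 \<le> \<delta>\<^sup>2" by (cases "a = 0") (auto simp: power_mult_distrib sgn_if)
        moreover have "(Q / c)\<^sup>2 * (norm w')\<^sup>2 \<le> Q\<^sup>2"
          unfolding nw' by (cases "c = 0") (auto simp: power_divide)
        ultimately show ?thesis by simp
      qed
      also have "\<dots> = \<epsilon>\<^sup>2" unfolding Q_def using de2 by simp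
      finally have "(norm ?v)\<^sup>2 \<le> \<epsilon>\<^sup>2" .
      then show "norm ?v \<le> \<epsilon>" using e0 by (meson less_imp_le norm_ge_zero power2_le_imp_le)
      show "\<bar>?v \<bullet> u\<bar> \<le> \<delta>" unfolding vu using d0 by (cases "a = 0") (auto simp: abs_mult sgn_if)
      have "w \<bullet> ?v = \<delta> * sgn a * (w \<bullet> u) + (Q / c) * (w \<bullet> w')"
        by (simp add: inner_add_right)
      also have "w \<bullet> w' = c\<^sup>2"
      proof -
        have "w \<bullet> w' = (a *\<^sub>R u + w') \<bullet> w'" unfolding w'_def by simp
        also have "\<dots> = (norm w')\<^sup>2" by (simp add: inner_add_left power2_norm_eq_inner w'u uw')
        finally show ?thesis using nw' by simp
      qed
      also have "\<delta> * sgn a * (w \<bullet> u) + Q / c * c\<^sup>2 = \<bar>a\<bar> * \<delta> + c * Q"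
        unfolding a[symmetric] by (cases "c = 0") (auto simp: power2_eq_square abs_sgn mult.commute)
      finally show "w \<bullet> ?v = K" unfolding KK .
    qed
  qed
qed

lemma hsa_iff:
  fixes w u x :: "'a::euclidean_space"
  assumes bound: "\<forall>v. norm v \<le> \<epsilon> \<and> \<bar>v \<bullet> u\<bar> \<le> \<delta> \<longrightarrow> w \<bullet> v \<le> K"
    and ex: "\<exists>v. norm v \<le> \<epsilon> \<and> \<bar>v \<bullet> u\<bar> \<le> \<delta> \<and> w \<bullet> v = K"
  shows "has_strong_adv w b u \<epsilon> \<delta> x \<longleftrightarrow> (if lin_class w b x then w \<bullet> x + b \<le> K else - K < w \<bullet> x + b)"
proof -
  obtain v0 where v0: "norm v0 \<le> \<epsilon>" "\<bar>v0 \<bullet> u\<bar> \<le> \<delta>" "w \<bullet> v0 = K" using ex by blast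
  show ?thesis
  proof (cases "lin_class w b x")
    case True
    have "has_strong_adv w b u \<epsilon> \<delta> x \<longleftrightarrow> w \<bullet> x + b \<le> K"
    proof
      assume "has_strong_adv w b u \<epsilon> \<delta> x"
      then obtain x' where x': "norm (x - x') \<le> \<epsilon>" "\<bar>(x - x') \<bullet> u\<bar> \<le> \<delta>" "lin_class w b x' \<noteq> lin_class w b x"
        unfolding has_strong_adv_def by blast
      have "w \<bullet> (x - x') \<le> K" using bound x' by blast
      moreover have "\<not> w \<bullet> x' + b > 0" using x'(3) True unfolding lin_class_def by simp
      ultimately show "w \<bullet> x + b \<le> K" by (simp add: inner_diff_right)
    next
      assume "w \<bullet> x + b \<le> K"
      then show "has_strong_adv w b u \<epsilon> \<delta> x" unfolding has_strong_adv_def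
        using True v0 by (intro exI[of _ "x - v0"]) (auto simp: lin_class_def inner_diff_right)
    qed
    then show ?thesis using True by simp
  next
    case False
    have "has_strong_adv w b u \<epsilon> \<delta> x \<longleftrightarrow> - K < w \<bullet> x + b"
    proof
      assume "has_strong_adv w b u \<epsilon> \<delta> x"
      then obtain x' where x': "norm (x - x') \<le> \<epsilon>" "\<bar>(x - x') \<bullet> u\<bar> \<le> \<delta>" "lin_class w b x' \<noteq> lin_class w b x"
        unfolding has_strong_adv_def by blast
      have "norm (x' - x) \<le> \<epsilon>" "\<bar>(x' - x) \<bullet> u\<bar> \<le> \<delta>" using x'(1,2) by (simp_all add: norm_minus_commute inner_diff_left)
      then have "w \<bullet> (x' - x) \<le> K" using bound by blast
      moreover have "w \<bullet> x' + b > 0" using x'(3) False unfolding lin_class_def by simp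
      ultimately show "- K < w \<bullet> x + b" by (simp add: inner_diff_right)
    next
      assume "- K < w \<bullet> x + b"
      then show "has_strong_adv w b u \<epsilon> \<delta> x" unfolding has_strong_adv_def
        using False v0 by (intro exI[of _ "x + v0"]) (auto simp: lin_class_def inner_add_right)
    qed
    then show ?thesis using False by simp
  qed
qed



lemma meas_inner:
  fixes m w :: "'a::euclidean_space"
  assumes s: "\<sigma> > 0" and w: "w \<noteq> 0" and S: "S \<in> sets borel"
  shows "measure (iso_gauss m \<sigma>) {x. w \<bullet> x \<in> S} = measure (density lborel (normal_density (w \<bullet> m) (norm w * \<sigma>))) S"
proof -
  have sp: "space (iso_gauss m \<sigma>) = UNIV" by (simp add: iso_gauss_def)
  have mi: "(\<lambda>x. w \<bullet> x) \<in> measurable (iso_gauss m \<sigma>) lborel"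
    using measurable_cong_sets[of "iso_gauss m \<sigma>" borel lborel lborel] by (simp add: iso_gauss_def)
  have "measure (density lborel (normal_density (w \<bullet> m) (norm w * \<sigma>))) S
      = measure (distr (iso_gauss m \<sigma>) lborel (\<lambda>x. w \<bullet> x)) S" by (simp add: iso_gauss_inner[OF s w])
  also have "\<dots> = measure (iso_gauss m \<sigma>) ((\<lambda>x. w \<bullet> x) -` S \<inter> space (iso_gauss m \<sigma>))"
    by (rule measure_distr[OF mi]) (use S in simp)
  also have "(\<lambda>x. w \<bullet> x) -` S \<inter> space (iso_gauss m \<sigma>) = {x. w \<bullet> x \<in> S}" by (auto simp: sp)
  finally show ?thesis ..
qed

theorem theorem2:
  fixes \<mu>p \<mu>n w :: "'a::euclidean_space" and \<sigma> b \<epsilon> \<delta> :: real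
  assumes "\<mu>p \<noteq> \<mu>n" and "\<sigma> > 0" and "w \<noteq> 0" and "\<epsilon> > 0" and "\<delta> \<ge> 0"
  shows "let \<mu> = (1/2) *\<^sub>R (\<mu>p - \<mu>n);
             \<mu>bar = (1/2) *\<^sub>R (\<mu>p + \<mu>n);
             b' = w \<bullet> \<mu>bar + b;
             \<mu>0 = (1 / norm \<mu>) *\<^sub>R \<mu>;
             \<theta> = arccos (\<bar>w \<bullet> \<mu>0\<bar> / norm w);
             \<beta> = min (\<epsilon> * cos \<theta>) \<delta>;
             g = \<beta> * cos \<theta> + sqrt (\<epsilon>\<^sup>2 - \<beta>\<^sup>2) * sin \<theta>;
             T = (1/2) * (Phi ((w \<bullet> \<mu> + b') / (norm w * \<sigma>) - g / \<sigma>)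
                          + Phi ((w \<bullet> \<mu> - b') / (norm w * \<sigma>) - g / \<sigma>))
         in p_sadv \<mu>p \<mu>n \<sigma> w b \<epsilon> \<delta> = 1 - p_m \<mu>p \<mu>n \<sigma> w b - T
          \<and> p_sadv \<mu>p \<mu>n \<sigma> w b \<epsilon> \<delta> + p_m \<mu>p \<mu>n \<sigma> w b = 1 - T"
proof -
  note neq = assms(1) and s = assms(2) and w0 = assms(3) and e0 = assms(4) and d0 = assms(5)
  define \<mu> where "\<mu> = (1/2) *\<^sub>R (\<mu>p - \<mu>n)"
  define \<mu>bar where "\<mu>bar = (1/2) *\<^sub>R (\<mu>p + \<mu>n)"
  define b' where "b' = w \<bullet> \<mu>bar + b"
  define \<mu>0 where "\<mu>0 = (1 / norm \<mu>) *\<^sub>R \<mu>"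
  define \<theta> where "\<theta> = arccos (\<bar>w \<bullet> \<mu>0\<bar> / norm w)"
  define \<beta> where "\<beta> = min (\<epsilon> * cos \<theta>) \<delta>"
  define g where "g = \<beta> * cos \<theta> + sqrt (\<epsilon>\<^sup>2 - \<beta>\<^sup>2) * sin \<theta>"
  define T where "T = (1/2) * (Phi ((w \<bullet> \<mu> + b') / (norm w * \<sigma>) - g / \<sigma>)
                          + Phi ((w \<bullet> \<mu> - b') / (norm w * \<sigma>) - g / \<sigma>))"
  define a where "a = w \<bullet> \<mu>0"
  define c where "c = sqrt ((norm w)\<^sup>2 - a\<^sup>2)"
  define K where "K = \<bar>a\<bar> * \<beta> + c * sqrt (\<epsilon>\<^sup>2 - \<beta>\<^sup>2)"
  have nw: "norm w > 0" using w0 by simp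
  have mu0: "\<mu> \<noteq> 0" unfolding \<mu>_def using neq by simp
  have u1: "norm \<mu>0 = 1" unfolding \<mu>0_def using mu0 by simp
  have aw: "\<bar>a\<bar> \<le> norm w" unfolding a_def using Cauchy_Schwarz_ineq2[of w \<mu>0] u1 by simp
  have a2: "a\<^sup>2 \<le> (norm w)\<^sup>2" using power_mono[OF aw, of 2] by simp
  have y0: "0 \<le> \<bar>a\<bar> / norm w" by simp
  have y1: "\<bar>a\<bar> / norm w \<le> 1" using aw nw by simp
  have cos_t: "cos \<theta> = \<bar>a\<bar> / norm w" unfolding \<theta>_def a_def[symmetric]
    by (rule cos_arccos) (use y0 y1 in linarith)+
  have sin_t: "sin \<theta> = c / norm w"
  proof -
    have "sin \<theta> = sqrt (1 - (\<bar>a\<bar> / norm w)\<^sup>2)" unfolding \<theta>_def a_def[symmetric]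
      by (rule sin_arccos) (use y0 y1 in linarith)+
    also have "1 - (\<bar>a\<bar> / norm w)\<^sup>2 = ((norm w)\<^sup>2 - a\<^sup>2) / (norm w)\<^sup>2"
      using nw by (simp add: field_simps power_divide)
    also have "sqrt \<dots> = c / norm w" unfolding c_def by (simp add: real_sqrt_divide)
    finally show ?thesis .
  qed
  have bet: "\<beta> = min (\<epsilon> * (\<bar>a\<bar> / norm w)) \<delta>" unfolding \<beta>_def cos_t ..
  have Kg: "K = norm w * g"
    unfolding K_def g_def cos_t sin_t using nw by (simp add: field_simps)
  have AB: "(\<forall>v. norm v \<le> \<epsilon> \<and> \<bar>v \<bullet> \<mu>0\<bar> \<le> \<delta> \<longrightarrow> w \<bullet> v \<le> K) \<and> (\<exists>v. norm v \<le> \<epsilon> \<and> \<bar>v \<bullet> \<mu>0\<bar> \<le> \<delta> \<and> w \<bullet> v = K)"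
    by (rule adv_bound[OF u1 w0 e0 d0 a_def c_def bet K_def])
  have K0: "0 \<le> K" using AB e0 d0 by (metis abs_zero inner_zero_left inner_zero_right norm_zero less_imp_le)
  have hsa: "has_strong_adv w b \<mu>0 \<epsilon> \<delta> x \<longleftrightarrow> (if lin_class w b x then w \<bullet> x + b \<le> K else - K < w \<bullet> x + b)" for x
    using hsa_iff[of \<epsilon> \<mu>0 \<delta> w K b x] AB by blast
  define Np where "Np = density lborel (normal_density (w \<bullet> \<mu>p) (norm w * \<sigma>))"
  define Nn where "Nn = density lborel (normal_density (w \<bullet> \<mu>n) (norm w * \<sigma>))"
  have ws: "norm w * \<sigma> > 0" using nw s by simp
  interpret Np: prob_space Np unfolding Np_def by (rule prob_space_normal_density[OF ws])
  interpret Nn: prob_space Nn unfolding Nn_def by (rule prob_space_normal_density[OF ws])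
  have S1: "{x. lin_class w b x \<and> has_strong_adv w b \<mu>0 \<epsilon> \<delta> x} = {x. w \<bullet> x \<in> {-b<..K-b}}"
    using hsa by (auto simp: lin_class_def)
  have S2: "{x. \<not> lin_class w b x \<and> has_strong_adv w b \<mu>0 \<epsilon> \<delta> x} = {x. w \<bullet> x \<in> {-K-b<..-b}}"
    using hsa by (auto simp: lin_class_def)
  have M1: "{x. \<not> lin_class w b x} = {x. w \<bullet> x \<in> {..-b}}" by (auto simp: lin_class_def)
  have M2: "{x. lin_class w b x} = {x. w \<bullet> x \<in> {-b<..}}" by (auto simp: lin_class_def)
  have bs: "{-b<..K-b} \<in> sets borel" "{-K-b<..-b} \<in> sets borel" "{..-b} \<in> sets borel" "{-b<..} \<in> sets borel"
    by simp_all
  have ps: "p_sadv \<mu>p \<mu>n \<sigma> w b \<epsilon> \<delta> = 1/2 * measure Np {-b<..K-b} + 1/2 * measure Nn {-K-b<..-b}"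
    unfolding p_sadv_def Let_def \<mu>_def[symmetric] \<mu>0_def[symmetric] S1 S2 Np_def Nn_def
      meas_inner[OF s w0 bs(1)] meas_inner[OF s w0 bs(2)] by simp
  have pm: "p_m \<mu>p \<mu>n \<sigma> w b = 1/2 * measure Np {..-b} + 1/2 * measure Nn {-b<..}"
    unfolding p_m_def M1 M2 Np_def Nn_def meas_inner[OF s w0 bs(3)] meas_inner[OF s w0 bs(4)] by simp
  have d1: "measure Np {-b<..K-b} = measure Np {..K-b} - measure Np {..-b}"
  proof -
    have "{-b<..K-b} = {..K-b} - {..-b}" by auto
    moreover have "measure Np ({..K-b} - {..-b}) = measure Np {..K-b} - measure Np {..-b}"
      by (rule Np.finite_measure_Diff) (use K0 in \<open>auto simp: Np_def\<close>)
    ultimately show ?thesis by simp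
  qed
  have d2: "measure Nn {-K-b<..-b} = measure Nn {-K-b<..} - measure Nn {-b<..}"
  proof -
    have "{-K-b<..-b} = {-K-b<..} - {-b<..}" by auto
    moreover have "{-b<..} \<subseteq> {-K-b<..}" using K0 by auto
    moreover have "measure Nn ({-K-b<..} - {-b<..}) = measure Nn {-K-b<..} - measure Nn {-b<..}"
      by (rule Nn.finite_measure_Diff) (use K0 in \<open>auto simp: Nn_def\<close>)
    ultimately show ?thesis by simp
  qed
  have sum: "p_sadv \<mu>p \<mu>n \<sigma> w b \<epsilon> \<delta> + p_m \<mu>p \<mu>n \<sigma> w b = 1/2 * measure Np {..K-b} + 1/2 * measure Nn {-K-b<..}"
    unfolding ps pm d1 d2 by (simp add: field_simps)
  have e1: "measure Np {..K-b} = 1 - Phi ((w \<bullet> \<mu> + b') / (norm w * \<sigma>) - g / \<sigma>)"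
  proof -
    have "measure Np {..K-b} = Phi ((K - b - w \<bullet> \<mu>p) / (norm w * \<sigma>))"
      unfolding Np_def by (rule normal_le[OF ws])
    also have "(K - b - w \<bullet> \<mu>p) / (norm w * \<sigma>) = - ((w \<bullet> \<mu> + b') / (norm w * \<sigma>) - g / \<sigma>)"
    proof -
      have "w \<bullet> \<mu> + b' = w \<bullet> \<mu>p + b" unfolding b'_def \<mu>_def \<mu>bar_def
        by (simp add: inner_diff_right inner_add_right algebra_simps)
      then show ?thesis unfolding Kg using nw s by (simp add: field_simps)
    qed
    finally show ?thesis using Phi_neg[of "(w \<bullet> \<mu> + b') / (norm w * \<sigma>) - g / \<sigma>"] by simp
  qed
  have e2: "measure Nn {-K-b<..} = 1 - Phi ((w \<bullet> \<mu> - b') / (norm w * \<sigma>) - g / \<sigma>)"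
  proof -
    have "measure Nn {-K-b<..} = 1 - Phi ((-K - b - w \<bullet> \<mu>n) / (norm w * \<sigma>))"
      unfolding Nn_def by (rule normal_gt[OF ws])
    also have "(-K - b - w \<bullet> \<mu>n) / (norm w * \<sigma>) = (w \<bullet> \<mu> - b') / (norm w * \<sigma>) - g / \<sigma>"
    proof -
      have "w \<bullet> \<mu> - b' = - (w \<bullet> \<mu>n) - b" unfolding b'_def \<mu>_def \<mu>bar_def
        by (simp add: inner_diff_right inner_add_right algebra_simps)
      then have h: "-K - b - w \<bullet> \<mu>n = (w \<bullet> \<mu> - b') - norm w * g" unfolding Kg by linarith
      show ?thesis unfolding h using nw s by (simp add: diff_divide_distrib)
    qed
    finally show ?thesis .
  qed
  have main: "p_sadv \<mu>p \<mu>n \<sigma> w b \<epsilon> \<delta> + p_m \<mu>p \<mu>n \<sigma> w b = 1 - T"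
    unfolding sum e1 e2 T_def by (simp add: field_simps)
  then have "p_sadv \<mu>p \<mu>n \<sigma> w b \<epsilon> \<delta> = 1 - p_m \<mu>p \<mu>n \<sigma> w b - T \<and> p_sadv \<mu>p \<mu>n \<sigma> w b \<epsilon> \<delta> + p_m \<mu>p \<mu>n \<sigma> w b = 1 - T"
    by simp
  then show ?thesis
    unfolding Let_def T_def g_def \<beta>_def \<theta>_def \<mu>0_def b'_def \<mu>bar_def \<mu>_def .
qed

end
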